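(* Let $T$ be a finite rooted tree with root $\rho$, arc set $A_T$ (arcs directed away from the root) and leaf set $X$, with a non-negative length $\lambda_a$ on each arc $a\in A_T$. Consider a trait-dependent field of bullets (t-FOB) model on $T$, defined as follows. For $j=1,\dots,k$, $\xi_j$ is a two-state Markov process on $T$ with state space $\{0,1\}$, strictly positive root probabilities $\pi^{(j)}_0,\pi^{(j)}_1$, and transition matrices $P^{(j)}(r,s)$ with $\det P^{(j)}(r,s)\ge 0$ for all arcs $(r,s)$; these $k$ processes are independent, and $\boldsymbol{\xi}=(\xi_1,\dots,\xi_k)$ assigns a state $\boldsymbol{\xi}(x)\in\{0,1\}^k$ to each leaf $x$. For each species $x\in X$ and each $\mathbf{i}\in\{0,1\}^k$ a number $p_x^{\mathbf{i}}\in[0,1]$ is given, such that $p_x^{\mathbf{i}}\le p_x^{\mathbf{l}}$ whenever $l_j\le i_j$ for all $j=1,\dots,k$. Conditional on the leaf states, the species go extinct independently, species $x$ in state $\mathbf{i}$ going extinct with probability $p_x^{\mathbf{i}}$. The associated generalized field of bullets (g-FOB) model is the model in which each species $x\in X$ goes extinct independently of the others with probability $p_x=\sum_{\mathbf{i}\in\{0,1\}^k}p_x^{\mathbf{i}}\,\mathbb{P}(\boldsymbol{\xi}(x)=\mathbf{i})$ (the same marginal extinction probability as under the t-FOB model). Then the expected future phylogenetic diversity under the t-FOB model is less than or equal to the expected future phylogenetic diversity under the associated g-FOB model.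
   Context: For $Y\subseteq X$, the phylogenetic diversity $\varphi_Y$ is the sum of the lengths of the arcs of the minimal subtree of $T$ connecting the root and the leaves in $Y$. Under an extinction model, the future phylogenetic diversity is the random variable $\varphi=\varphi_S$, where $S$ is the (random) set of species in $X$ that are not extinct. Equivalently, $\mathbb{E}[\varphi]=\sum_{a=(u,v)\in A_T}\lambda_a\bigl(1-\mathbb{P}(\text{all leaves in }C_v\text{ are extinct})\bigr)$, where $C_v$ is the set of leaves separated from the root by $v$ ($C_v=\{v\}$ if $v$ is a leaf). Markov processes on trees: $\xi(\rho)=i$ with probability $\pi_i$, and the $(i,l)$ entry of $P(r,s)$ is the conditional probability that $\xi(s)=l$ given $\xi(r)=i$, with the Markov property along the tree. *)

theory Defs
  imports Complex_Main "HOL-Library.FuncSet"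
begin

definition rooted_tree :: "'v set \<Rightarrow> ('v \<times> 'v) set \<Rightarrow> 'v \<Rightarrow> bool" where
  "rooted_tree V A rho \<longleftrightarrow>
     finite V \<and> A \<subseteq> V \<times> V \<and> rho \<in> V \<and>
     (\<forall>u. (u, rho) \<notin> A) \<and>
     (\<forall>v \<in> V - {rho}. \<exists>!u. (u, v) \<in> A) \<and>
     (\<forall>v \<in> V. (rho, v) \<in> A\<^sup>*)"

definition leaves :: "'v set \<Rightarrow> ('v \<times> 'v) set \<Rightarrow> 'v set" where
  "leaves V A = {v \<in> V. \<forall>w. (v, w) \<notin> A}"

definition clade :: "'v set \<Rightarrow> ('v \<times> 'v) set \<Rightarrow> 'v \<Rightarrow> 'v set" where
  "clade V A v = {x \<in> leaves V A. (v, x) \<in> A\<^sup>*}"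

text \<open>Phylogenetic diversity of Y: total length of the arcs of the minimal subtree
  connecting the root and the leaves in Y, i.e. arcs (u,v) lying on a path from the
  root to some y in Y.\<close>
definition PD :: "'v set \<Rightarrow> ('v \<times> 'v) set \<Rightarrow> (('v \<times> 'v) \<Rightarrow> real) \<Rightarrow> 'v set \<Rightarrow> real" where
  "PD V A lam Y = (\<Sum>a \<in> {a \<in> A. clade V A (snd a) \<inter> Y \<noteq> {}}. lam a)"

definition two_state_markov :: "('v \<times> 'v) set \<Rightarrow> (nat \<Rightarrow> real) \<Rightarrow> (('v \<times> 'v) \<Rightarrow> nat \<Rightarrow> nat \<Rightarrow> real) \<Rightarrow> bool" where
  "two_state_markov A rp P \<longleftrightarrow>
     rp 0 > 0 \<and> rp 1 > 0 \<and> rp 0 + rp 1 = 1 \<and>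
     (\<forall>a \<in> A. (\<forall>i \<in> {0,1}. \<forall>l \<in> {0,1}. P a i l \<ge> 0) \<and>
               (\<forall>i \<in> {0,1}. P a i 0 + P a i 1 = 1) \<and>
               P a 0 0 * P a 1 1 - P a 0 1 * P a 1 0 \<ge> 0)"

definition tree_prob :: "('v \<times> 'v) set \<Rightarrow> 'v \<Rightarrow> (nat \<Rightarrow> real) \<Rightarrow> (('v \<times> 'v) \<Rightarrow> nat \<Rightarrow> nat \<Rightarrow> real) \<Rightarrow> ('v \<Rightarrow> nat) \<Rightarrow> real" where
  "tree_prob A rho rp P \<sigma> = rp (\<sigma> rho) * (\<Prod>a \<in> A. P a (\<sigma> (fst a)) (\<sigma> (snd a)))"

definition states :: "nat \<Rightarrow> (nat \<Rightarrow> nat) set" where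
  "states k = {..<k} \<rightarrow>\<^sub>E {0, 1}"

definition configs :: "nat \<Rightarrow> 'v set \<Rightarrow> (nat \<Rightarrow> 'v \<Rightarrow> nat) set" where
  "configs k V = {..<k} \<rightarrow>\<^sub>E (V \<rightarrow>\<^sub>E {0, 1})"

definition joint_prob :: "nat \<Rightarrow> ('v \<times> 'v) set \<Rightarrow> 'v \<Rightarrow> (nat \<Rightarrow> nat \<Rightarrow> real) \<Rightarrow> (nat \<Rightarrow> ('v \<times> 'v) \<Rightarrow> nat \<Rightarrow> nat \<Rightarrow> real) \<Rightarrow> (nat \<Rightarrow> 'v \<Rightarrow> nat) \<Rightarrow> real" where
  "joint_prob k A rho rp P \<sigma>s = (\<Prod>j<k. tree_prob A rho (rp j) (P j) (\<sigma>s j))"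

definition leaf_state :: "nat \<Rightarrow> (nat \<Rightarrow> 'v \<Rightarrow> nat) \<Rightarrow> 'v \<Rightarrow> (nat \<Rightarrow> nat)" where
  "leaf_state k \<sigma>s x = restrict (\<lambda>j. \<sigma>s j x) {..<k}"

definition leaf_marginal :: "nat \<Rightarrow> 'v set \<Rightarrow> ('v \<times> 'v) set \<Rightarrow> 'v \<Rightarrow> (nat \<Rightarrow> nat \<Rightarrow> real) \<Rightarrow> (nat \<Rightarrow> ('v \<times> 'v) \<Rightarrow> nat \<Rightarrow> nat \<Rightarrow> real) \<Rightarrow> 'v \<Rightarrow> (nat \<Rightarrow> nat) \<Rightarrow> real" where
  "leaf_marginal k V A rho rp P x i =
     (\<Sum>\<sigma>s \<in> {\<sigma>s \<in> configs k V. leaf_state k \<sigma>s x = i}. joint_prob k A rho rp P \<sigma>s)"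

definition tfob_surv_prob :: "nat \<Rightarrow> 'v set \<Rightarrow> ('v \<times> 'v) set \<Rightarrow> 'v \<Rightarrow> (nat \<Rightarrow> nat \<Rightarrow> real) \<Rightarrow> (nat \<Rightarrow> ('v \<times> 'v) \<Rightarrow> nat \<Rightarrow> nat \<Rightarrow> real) \<Rightarrow> ('v \<Rightarrow> (nat \<Rightarrow> nat) \<Rightarrow> real) \<Rightarrow> 'v set \<Rightarrow> real" where
  "tfob_surv_prob k V A rho rp P p S =
     (\<Sum>\<sigma>s \<in> configs k V. joint_prob k A rho rp P \<sigma>s *
        (\<Prod>x \<in> S. 1 - p x (leaf_state k \<sigma>s x)) *
        (\<Prod>x \<in> leaves V A - S. p x (leaf_state k \<sigma>s x)))"

definition tfob_expected_PD :: "nat \<Rightarrow> 'v set \<Rightarrow> ('v \<times> 'v) set \<Rightarrow> 'v \<Rightarrow> (('v \<times> 'v) \<Rightarrow> real) \<Rightarrow> (nat \<Rightarrow> nat \<Rightarrow> real) \<Rightarrow> (nat \<Rightarrow> ('v \<times> 'v) \<Rightarrow> nat \<Rightarrow> nat \<Rightarrow> real) \<Rightarrow> ('v \<Rightarrow> (nat \<Rightarrow> nat) \<Rightarrow> real) \<Rightarrow> real" where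
  "tfob_expected_PD k V A rho lam rp P p =
     (\<Sum>S \<in> Pow (leaves V A). tfob_surv_prob k V A rho rp P p S * PD V A lam S)"

definition gfob_ext_prob :: "nat \<Rightarrow> 'v set \<Rightarrow> ('v \<times> 'v) set \<Rightarrow> 'v \<Rightarrow> (nat \<Rightarrow> nat \<Rightarrow> real) \<Rightarrow> (nat \<Rightarrow> ('v \<times> 'v) \<Rightarrow> nat \<Rightarrow> nat \<Rightarrow> real) \<Rightarrow> ('v \<Rightarrow> (nat \<Rightarrow> nat) \<Rightarrow> real) \<Rightarrow> 'v \<Rightarrow> real" where
  "gfob_ext_prob k V A rho rp P p x =
     (\<Sum>i \<in> states k. p x i * leaf_marginal k V A rho rp P x i)"

definition gfob_expected_PD :: "'v set \<Rightarrow> ('v \<times> 'v) set \<Rightarrow> (('v \<times> 'v) \<Rightarrow> real) \<Rightarrow> ('v \<Rightarrow> real) \<Rightarrow> real" where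
  "gfob_expected_PD V A lam q =
     (\<Sum>S \<in> Pow (leaves V A).
        (\<Prod>x \<in> S. 1 - q x) * (\<Prod>x \<in> leaves V A - S. q x) * PD V A lam S)"

end

theory Submission
  imports Defs
begin

definition ps :: "('s \<Rightarrow> 's option) \<Rightarrow> ('s \<Rightarrow> nat) \<Rightarrow> 's \<Rightarrow> nat" where
  "ps par \<sigma> i = (case par i of None \<Rightarrow> 0 | Some j \<Rightarrow> \<sigma> j)"

definition wt :: "('s \<Rightarrow> 's option) \<Rightarrow> ('s \<Rightarrow> nat \<Rightarrow> nat \<Rightarrow> real) \<Rightarrow> 's set \<Rightarrow> ('s \<Rightarrow> nat) \<Rightarrow> real" where
  "wt par K I \<sigma> = (\<Prod>i\<in>I. K i (ps par \<sigma> i) (\<sigma> i))"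

definition cfg :: "'s set \<Rightarrow> ('s \<Rightarrow> nat) set" where
  "cfg I = I \<rightarrow>\<^sub>E {0,1}"

definition EE :: "('s \<Rightarrow> 's option) \<Rightarrow> ('s \<Rightarrow> nat \<Rightarrow> nat \<Rightarrow> real) \<Rightarrow> 's set \<Rightarrow> (('s \<Rightarrow> nat) \<Rightarrow> real) \<Rightarrow> real" where
  "EE par K I F = (\<Sum>\<sigma>\<in>cfg I. wt par K I \<sigma> * F \<sigma>)"

definition decr :: "'s set \<Rightarrow> (('s \<Rightarrow> nat) \<Rightarrow> real) \<Rightarrow> bool" where
  "decr I F \<longleftrightarrow> (\<forall>\<sigma>\<in>cfg I. \<forall>\<tau>\<in>cfg I. (\<forall>x\<in>I. \<sigma> x \<le> \<tau> x) \<longrightarrow> F \<tau> \<le> F \<sigma>)"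

definition closed :: "('s \<Rightarrow> 's option) \<Rightarrow> 's set \<Rightarrow> bool" where
  "closed par I \<longleftrightarrow> (\<forall>i\<in>I. \<forall>j. par i = Some j \<longrightarrow> j \<in> I)"

lemma sum_cfg_insert:
  assumes "i \<notin> I" "finite I"
  shows "(\<Sum>\<sigma>\<in>cfg (insert i I). h \<sigma>) = (\<Sum>\<tau>\<in>cfg I. \<Sum>b\<in>{0::nat,1}. h (\<tau>(i:=b)))"
proof -
  have "(\<Sum>\<sigma>\<in>cfg (insert i I). h \<sigma>) = (\<Sum>x\<in>{0::nat,1} \<times> cfg I. h ((\<lambda>(y, g). g(i := y)) x))"
    unfolding cfg_def PiE_insert_eq
    by (subst sum.reindex) (use inj_combinator[OF assms(1), of "\<lambda>_. {0::nat,1}"] in auto)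
  also have "\<dots> = (\<Sum>b\<in>{0::nat,1}. \<Sum>\<tau>\<in>cfg I. h (\<tau>(i:=b)))"
    by (simp add: sum.cartesian_product split_def)
  also have "\<dots> = (\<Sum>\<tau>\<in>cfg I. \<Sum>b\<in>{0::nat,1}. h (\<tau>(i:=b)))"
    by (rule sum.swap)
  finally show ?thesis .
qed

lemma cfg_upd: "\<tau> \<in> cfg I \<Longrightarrow> b \<in> {0,1} \<Longrightarrow> \<tau>(i:=b) \<in> cfg (insert i I)"
  unfolding cfg_def by (auto simp: PiE_iff extensional_def)

lemma decrD: "decr I F \<Longrightarrow> \<sigma> \<in> cfg I \<Longrightarrow> \<tau> \<in> cfg I \<Longrightarrow> (\<And>x. x \<in> I \<Longrightarrow> \<sigma> x \<le> \<tau> x) \<Longrightarrow> F \<tau> \<le> F \<sigma>"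
  unfolding decr_def by blast

lemma aux_mono:
  fixes a b a0 b0 h0 h1 :: real
  assumes "a \<le> b" "a0 + a = 1" "b0 + b = 1" "h1 \<le> h0"
  shows "h0*b0 + h1*b \<le> h0*a0 + h1*a"
proof -
  have e: "h0*a0 + h1*a - (h0*b0 + h1*b) = (h0-h1)*(b-a)"
    using assms(2,3) by algebra
  have "(h0-h1)*(b-a) \<ge> 0" using assms by simp
  with e show ?thesis by linarith
qed

lemma cheb2:
  fixes a0 a1 f0 f1 g0 g1 :: real
  assumes "a0 \<ge> 0" "a1 \<ge> 0" "a0 + a1 = 1" "f1 \<le> f0" "g1 \<le> g0"
  shows "(a0*f0 + a1*f1) * (a0*g0 + a1*g1) \<le> a0*(f0*g0) + a1*(f1*g1)"
proof -
  have "a0*(f0*g0) + a1*(f1*g1) - (a0*f0 + a1*f1) * (a0*g0 + a1*g1) = a0*a1*(f0-f1)*(g0-g1)"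
  proof -
    have h: "a1 = 1 - a0" using assms(3) by simp
    show ?thesis unfolding h by algebra
  qed
  moreover have "a0*a1*(f0-f1)*(g0-g1) \<ge> 0" using assms by simp
  ultimately show ?thesis by linarith
qed

locale fkg =
  fixes par :: "'s \<Rightarrow> 's option" and K :: "'s \<Rightarrow> nat \<Rightarrow> nat \<Rightarrow> real"
    and rank :: "'s \<Rightarrow> nat" and U :: "'s set"
  assumes Knn: "i \<in> U \<Longrightarrow> s \<in> {0,1} \<Longrightarrow> t \<in> {0,1} \<Longrightarrow> K i s t \<ge> 0"
    and Ksum: "i \<in> U \<Longrightarrow> s \<in> {0,1} \<Longrightarrow> K i s 0 + K i s 1 = 1"
    and Kmono: "i \<in> U \<Longrightarrow> K i 0 1 \<le> K i 1 1"
    and rank: "i \<in> U \<Longrightarrow> par i = Some j \<Longrightarrow> rank j < rank i"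
begin

lemma ps_range: "closed par I \<Longrightarrow> i \<in> I \<Longrightarrow> \<sigma> \<in> cfg I \<Longrightarrow> ps par \<sigma> i \<in> {0,1}"
  unfolding ps_def closed_def cfg_def by (auto split: option.splits)

lemma wt_nonneg: "I \<subseteq> U \<Longrightarrow> closed par I \<Longrightarrow> \<sigma> \<in> cfg I \<Longrightarrow> wt par K I \<sigma> \<ge> 0"
  unfolding wt_def
proof (rule prod_nonneg)
  fix i assume i: "i \<in> I" and "I \<subseteq> U" "closed par I" "\<sigma> \<in> cfg I"
  then show "K i (ps par \<sigma> i) (\<sigma> i) \<ge> 0"
    using Knn[of i "ps par \<sigma> i" "\<sigma> i"] ps_range[of I i \<sigma>] by (auto simp: cfg_def)
qed

lemma wt_insert:
  assumes "i \<notin> I" "finite I" "i \<in> U" "\<forall>j\<in>I. par j \<noteq> Some i"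
  shows "wt par K (insert i I) (\<tau>(i:=b)) = K i (ps par \<tau> i) b * wt par K I \<tau>"
proof -
  have pi: "ps par (\<tau>(i:=b)) i = ps par \<tau> i"
    using rank[OF assms(3)] unfolding ps_def by (cases "par i") auto
  have pj: "wt par K I (\<tau>(i:=b)) = wt par K I \<tau>"
    unfolding wt_def
    by (rule prod.cong) (use assms in \<open>auto simp: ps_def split: option.splits\<close>)
  show ?thesis using assms pi pj unfolding wt_def by (simp add: prod.insert)
qed

lemma EE_insert:
  assumes "i \<notin> I" "finite I" "i \<in> U" "\<forall>j\<in>I. par j \<noteq> Some i"
  shows "EE par K (insert i I) H = EE par K I (\<lambda>\<tau>. \<Sum>b\<in>{0::nat,1}. K i (ps par \<tau> i) b * H (\<tau>(i:=b)))"
  unfolding EE_def sum_cfg_insert[OF assms(1,2)] wt_insert[OF assms]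
  by (simp add: sum_distrib_left algebra_simps)

lemma EE_cong: "(\<And>\<sigma>. \<sigma> \<in> cfg I \<Longrightarrow> F \<sigma> = G \<sigma>) \<Longrightarrow> EE par K I F = EE par K I G"
  unfolding EE_def by (rule sum.cong) auto

lemma EE_mono: "I \<subseteq> U \<Longrightarrow> closed par I \<Longrightarrow> (\<And>\<sigma>. \<sigma> \<in> cfg I \<Longrightarrow> F \<sigma> \<le> G \<sigma>) \<Longrightarrow> EE par K I F \<le> EE par K I G"
  unfolding EE_def by (rule sum_mono) (simp add: mult_left_mono wt_nonneg)

lemma fkg_main:
  assumes "finite I"
  shows "I \<subseteq> U \<longrightarrow> closed par I \<longrightarrow> EE par K I (\<lambda>_. 1) = 1 \<and>
     (\<forall>F G. decr I F \<longrightarrow> decr I G \<longrightarrow> EE par K I F * EE par K I G \<le> EE par K I (\<lambda>\<sigma>. F \<sigma> * G \<sigma>))"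
  using assms
proof (induction I rule: finite_ranking_induct[where f = rank])
  case empty
  then show ?case by (simp add: EE_def cfg_def wt_def)
next
  case (insert x S)
  show ?case
  proof (cases "x \<in> S")
    case True
    then show ?thesis using insert by (simp add: insert_absorb)
  next
    case xS: False
    show ?thesis
    proof (intro impI)
      assume sub: "insert x S \<subseteq> U" and cl: "closed par (insert x S)"
      have xU: "x \<in> U" using sub by blast
      have nopar: "\<forall>j\<in>S. par j \<noteq> Some x"
      proof (intro ballI notI)
        fix j assume "j \<in> S" "par j = Some x"
        then have "rank x < rank j" using rank sub by blast
        with insert(2)[OF \<open>j \<in> S\<close>] show False by simp
      qed
      have clS: "closed par S"
        unfolding closed_def
      proof (intro ballI allI impI)
        fix j j' assume j: "j \<in> S" "par j = Some j'"
        then have "j' \<in> insert x S" using cl unfolding closed_def by blast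
        moreover have "j' \<noteq> x" using nopar j by auto
        ultimately show "j' \<in> S" by blast
      qed
      have subS: "S \<subseteq> U" using sub by blast
      from insert(3) subS clS have IH1: "EE par K S (\<lambda>_. 1) = 1"
        and IH2: "\<And>F G. decr S F \<Longrightarrow> decr S G \<Longrightarrow> EE par K S F * EE par K S G \<le> EE par K S (\<lambda>\<sigma>. F \<sigma> * G \<sigma>)"
        by blast+
      note EI = EE_insert[OF xS insert(1) xU nopar]
      define L where "L H = (\<lambda>\<tau>. \<Sum>b\<in>{0::nat,1}. K x (ps par \<tau> x) b * H (\<tau>(x:=b)))" for H
      have psx: "ps par \<tau> x \<in> {0,1}" if "\<tau> \<in> cfg S" for \<tau>
      proof (cases "par x")
        case None then show ?thesis by (simp add: ps_def)
      next
        case (Some j)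
        then have "j \<in> insert x S" using cl unfolding closed_def by blast
        moreover have "j \<noteq> x" using rank[OF xU Some] by auto
        ultimately show ?thesis using that Some by (auto simp: ps_def cfg_def)
      qed
      have one: "EE par K (insert x S) (\<lambda>_. 1) = 1"
      proof -
        have "EE par K (insert x S) (\<lambda>_. 1) = EE par K S (\<lambda>_. 1)"
          unfolding EI by (rule EE_cong) (use Ksum[OF xU psx] in simp)
        then show ?thesis using IH1 by simp
      qed
      have decrL: "decr S (L H)" if dH: "decr (insert x S) H" for H
        unfolding decr_def
      proof (intro ballI impI)
        fix \<sigma> \<tau> assume st: "\<sigma> \<in> cfg S" "\<tau> \<in> cfg S" "\<forall>y\<in>S. \<sigma> y \<le> \<tau> y"
        have le_ps: "ps par \<sigma> x \<le> ps par \<tau> x"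
        proof (cases "par x")
          case None then show ?thesis by (simp add: ps_def)
        next
          case (Some j)
          then have "j \<in> insert x S" using cl unfolding closed_def by blast
          moreover have "j \<noteq> x" using rank[OF xU Some] by auto
          ultimately show ?thesis using st Some by (auto simp: ps_def)
        qed
        have H0: "H (\<tau>(x:=0)) \<le> H (\<sigma>(x:=0))"
          by (rule decrD[OF dH cfg_upd[OF st(1)] cfg_upd[OF st(2)]]) (use st in auto)
        have H1: "H (\<tau>(x:=1)) \<le> H (\<sigma>(x:=1))"
          by (rule decrD[OF dH cfg_upd[OF st(1)] cfg_upd[OF st(2)]]) (use st in auto)
        have "L H \<tau> = K x (ps par \<tau> x) 0 * H (\<tau>(x:=0)) + K x (ps par \<tau> x) 1 * H (\<tau>(x:=1))"
          by (simp add: L_def)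
        also have "\<dots> \<le> K x (ps par \<tau> x) 0 * H (\<sigma>(x:=0)) + K x (ps par \<tau> x) 1 * H (\<sigma>(x:=1))"
          using Knn[OF xU psx[OF st(2)]] H0 H1 by (auto intro!: add_mono mult_left_mono)
        also have "\<dots> \<le> K x (ps par \<sigma> x) 0 * H (\<sigma>(x:=0)) + K x (ps par \<sigma> x) 1 * H (\<sigma>(x:=1))"
        proof -
          have H01s: "H (\<sigma>(x:=1)) \<le> H (\<sigma>(x:=0))"
            by (rule decrD[OF dH cfg_upd[OF st(1)] cfg_upd[OF st(1)]]) auto
          have "K x (ps par \<sigma> x) 1 \<le> K x (ps par \<tau> x) 1"
            using psx[OF st(1)] psx[OF st(2)] le_ps Kmono[OF xU] by auto
          moreover have "K x (ps par \<sigma> x) 0 = 1 - K x (ps par \<sigma> x) 1"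
            using Ksum[OF xU psx[OF st(1)]] by simp
          moreover have "K x (ps par \<tau> x) 0 = 1 - K x (ps par \<tau> x) 1"
            using Ksum[OF xU psx[OF st(2)]] by simp
          ultimately show ?thesis using H01s
            using aux_mono[of "K x (ps par \<sigma> x) 1" "K x (ps par \<tau> x) 1" "K x (ps par \<sigma> x) 0"
               "K x (ps par \<tau> x) 0" "H (\<sigma>(x:=1))" "H (\<sigma>(x:=0))"] by (simp add: mult.commute)
        qed
        also have "\<dots> = L H \<sigma>" by (simp add: L_def)
        finally show "L H \<tau> \<le> L H \<sigma>" .
      qed
      have two: "EE par K (insert x S) F * EE par K (insert x S) G \<le> EE par K (insert x S) (\<lambda>\<sigma>. F \<sigma> * G \<sigma>)"
        if dF: "decr (insert x S) F" and dG: "decr (insert x S) G" for F G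
      proof -
        have "EE par K (insert x S) F * EE par K (insert x S) G = EE par K S (L F) * EE par K S (L G)"
          unfolding EI L_def ..
        also have "\<dots> \<le> EE par K S (\<lambda>\<tau>. L F \<tau> * L G \<tau>)"
          by (rule IH2) (use decrL dF dG in auto)
        also have "\<dots> \<le> EE par K S (L (\<lambda>\<sigma>. F \<sigma> * G \<sigma>))"
        proof (rule EE_mono[OF subS clS])
          fix \<tau> assume t: "\<tau> \<in> cfg S"
          have F01: "F (\<tau>(x:=1)) \<le> F (\<tau>(x:=0))"
            by (rule decrD[OF dF cfg_upd[OF t] cfg_upd[OF t]]) auto
          have G01: "G (\<tau>(x:=1)) \<le> G (\<tau>(x:=0))"
            by (rule decrD[OF dG cfg_upd[OF t] cfg_upd[OF t]]) auto
          show "L F \<tau> * L G \<tau> \<le> L (\<lambda>\<sigma>. F \<sigma> * G \<sigma>) \<tau>"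
            unfolding L_def
            using cheb2[OF Knn[OF xU psx[OF t]] Knn[OF xU psx[OF t]] Ksum[OF xU psx[OF t]] F01 G01]
            by simp
        qed
        also have "\<dots> = EE par K (insert x S) (\<lambda>\<sigma>. F \<sigma> * G \<sigma>)"
          unfolding EI L_def ..
        finally show ?thesis .
      qed
      show "EE par K (insert x S) (\<lambda>_. 1) = 1 \<and>
        (\<forall>F G. decr (insert x S) F \<longrightarrow> decr (insert x S) G \<longrightarrow>
           EE par K (insert x S) F * EE par K (insert x S) G \<le> EE par K (insert x S) (\<lambda>\<sigma>. F \<sigma> * G \<sigma>))"
        using one two by blast
    qed
  qed
qed

lemma decr_mult:
  assumes "decr I F" "decr I G" "\<forall>\<sigma>\<in>cfg I. F \<sigma> \<ge> 0" "\<forall>\<sigma>\<in>cfg I. G \<sigma> \<ge> 0"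
  shows "decr I (\<lambda>\<sigma>. F \<sigma> * G \<sigma>)"
  unfolding decr_def
proof (intro ballI impI)
  fix \<sigma> \<tau> assume st: "\<sigma> \<in> cfg I" "\<tau> \<in> cfg I" "\<forall>x\<in>I. \<sigma> x \<le> \<tau> x"
  have "F \<tau> \<le> F \<sigma>" "G \<tau> \<le> G \<sigma>" using assms(1,2) st unfolding decr_def by blast+
  then show "F \<tau> * G \<tau> \<le> F \<sigma> * G \<sigma>" using assms(3,4) st by (simp add: mult_mono)
qed

lemma decr_prod:
  assumes "finite C" "\<forall>x\<in>C. decr I (f x) \<and> (\<forall>\<sigma>\<in>cfg I. f x \<sigma> \<ge> 0)"
  shows "decr I (\<lambda>\<sigma>. \<Prod>x\<in>C. f x \<sigma>)"
  using assms
proof (induction C rule: finite_induct)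
  case empty
  then show ?case by (simp add: decr_def)
next
  case (insert a C)
  have "decr I (\<lambda>\<sigma>. f a \<sigma> * (\<Prod>x\<in>C. f x \<sigma>))"
    by (rule decr_mult) (use insert in \<open>auto intro: prod_nonneg\<close>)
  then show ?case using insert by simp
qed

lemma EE_nonneg: "I \<subseteq> U \<Longrightarrow> closed par I \<Longrightarrow> \<forall>\<sigma>\<in>cfg I. F \<sigma> \<ge> 0 \<Longrightarrow> EE par K I F \<ge> 0"
  unfolding EE_def by (rule sum_nonneg) (simp add: wt_nonneg)

lemma fkg_prod:
  assumes I: "finite I" "I \<subseteq> U" "closed par I"
    and "finite C" "\<forall>x\<in>C. decr I (f x) \<and> (\<forall>\<sigma>\<in>cfg I. f x \<sigma> \<ge> 0)"
  shows "(\<Prod>x\<in>C. EE par K I (f x)) \<le> EE par K I (\<lambda>\<sigma>. \<Prod>x\<in>C. f x \<sigma>)"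
  using assms(4,5)
proof (induction C rule: finite_induct)
  case empty
  then show ?case using fkg_main[OF I(1)] I by simp
next
  case (insert a C)
  have "(\<Prod>x\<in>insert a C. EE par K I (f x)) = EE par K I (f a) * (\<Prod>x\<in>C. EE par K I (f x))"
    using insert by simp
  also have "\<dots> \<le> EE par K I (f a) * EE par K I (\<lambda>\<sigma>. \<Prod>x\<in>C. f x \<sigma>)"
    by (rule mult_left_mono) (use insert I in \<open>auto intro: EE_nonneg\<close>)
  also have "\<dots> \<le> EE par K I (\<lambda>\<sigma>. f a \<sigma> * (\<Prod>x\<in>C. f x \<sigma>))"
    using fkg_main[OF I(1)] I insert decr_prod[OF insert(1), where f=f and I=I] by auto
  also have "\<dots> = EE par K I (\<lambda>\<sigma>. \<Prod>x\<in>insert a C. f x \<sigma>)"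
    using insert by simp
  finally show ?case .
qed

end



definition parent :: "('v \<times> 'v) set \<Rightarrow> 'v \<Rightarrow> 'v" where
  "parent A v = (THE u. (u, v) \<in> A)"

definition depth :: "('v \<times> 'v) set \<Rightarrow> 'v \<Rightarrow> 'v \<Rightarrow> nat" where
  "depth A rho v = (LEAST n. (rho, v) \<in> A ^^ n)"

context
  fixes V :: "'v set" and A :: "('v \<times> 'v) set" and rho :: 'v
  assumes tree: "rooted_tree V A rho"
begin

lemma tA: "A \<subseteq> V \<times> V" and tV: "finite V" and trho: "rho \<in> V"
  and tnoroot: "(u, rho) \<notin> A" and tuniq: "v \<in> V - {rho} \<Longrightarrow> \<exists>!u. (u, v) \<in> A"
  and treach: "v \<in> V \<Longrightarrow> (rho, v) \<in> A\<^sup>*"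
  using tree unfolding rooted_tree_def by auto

lemma parent_arc: "v \<in> V - {rho} \<Longrightarrow> (parent A v, v) \<in> A"
  unfolding parent_def by (rule theI') (rule tuniq)

lemma arc_parent: "(u, v) \<in> A \<Longrightarrow> u = parent A v \<and> v \<in> V - {rho} \<and> u \<in> V"
proof -
  assume a: "(u, v) \<in> A"
  have v: "v \<in> V - {rho}" using a tA tnoroot by (cases "v = rho") auto
  have "u = parent A v" using tuniq[OF v] parent_arc[OF v] a by blast
  then show ?thesis using v a tA by auto
qed

lemma parent_in: "v \<in> V - {rho} \<Longrightarrow> parent A v \<in> V"
  using parent_arc tA by blast

lemma depth_parent: "v \<in> V - {rho} \<Longrightarrow> depth A rho (parent A v) < depth A rho v"
proof -
  assume v: "v \<in> V - {rho}"
  have "\<exists>n. (rho, v) \<in> A ^^ n" using treach v rtrancl_power by blast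
  then have dv: "(rho, v) \<in> A ^^ depth A rho v" unfolding depth_def by (rule LeastI_ex)
  show ?thesis
  proof (cases "depth A rho v")
    case 0
    then show ?thesis using dv v by simp
  next
    case (Suc m)
    then obtain y where y: "(rho, y) \<in> A ^^ m" "(y, v) \<in> A" using dv by (auto elim: relpow_Suc_E)
    have "y = parent A v" using arc_parent[OF y(2)] by simp
    then have "depth A rho (parent A v) \<le> m" using y(1) unfolding depth_def by (auto intro: Least_le)
    then show ?thesis using Suc by simp
  qed
qed

lemma arcs_bij: "bij_betw (\<lambda>v. (parent A v, v)) (V - {rho}) A"
  unfolding bij_betw_def
proof
  show "inj_on (\<lambda>v. (parent A v, v)) (V - {rho})" by (auto simp: inj_on_def)
  show "(\<lambda>v. (parent A v, v)) ` (V - {rho}) = A"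
  proof
    show "(\<lambda>v. (parent A v, v)) ` (V - {rho}) \<subseteq> A" using parent_arc by auto
    show "A \<subseteq> (\<lambda>v. (parent A v, v)) ` (V - {rho})"
    proof
      fix a assume "a \<in> A"
      then obtain u v where a: "a = (u, v)" "(u, v) \<in> A" by (cases a) auto
      then show "a \<in> (\<lambda>v. (parent A v, v)) ` (V - {rho})" using arc_parent[OF a(2)] by auto
    qed
  qed
qed

end


lemma G1:
  fixes h :: "'a \<Rightarrow> real"
  assumes "finite L" "C \<subseteq> L"
  shows "(\<Sum>S\<in>Pow (L - C). (\<Prod>x\<in>S. 1 - h x) * (\<Prod>x\<in>L - S. h x)) = (\<Prod>x\<in>C. h x)"
proof -
  have fin: "finite (L - C)" "finite C" using assms finite_subset by auto
  have split: "(\<Prod>x\<in>L - S. h x) = (\<Prod>x\<in>C. h x) * (\<Prod>x\<in>(L - C) - S. h x)" if "S \<in> Pow (L - C)" for S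
  proof -
    have "L - S = C \<union> ((L - C) - S)" using that assms by auto
    then show ?thesis using fin that by (simp add: prod.union_disjoint Diff_Int_distrib2 Int_Diff) (subst prod.union_disjoint, auto)
  qed
  have "(\<Sum>S\<in>Pow (L - C). (\<Prod>x\<in>S. 1 - h x) * (\<Prod>x\<in>L - S. h x))
      = (\<Sum>S\<in>Pow (L - C). (\<Prod>x\<in>C. h x) * ((\<Prod>x\<in>S. 1 - h x) * (\<Prod>x\<in>(L - C) - S. h x)))"
    by (rule sum.cong) (auto simp: split)
  also have "\<dots> = (\<Prod>x\<in>C. h x) * (\<Prod>x\<in>L - C. (1 - h x) + h x)"
    unfolding prod_add[OF fin(1)] by (simp add: sum_distrib_left)
  also have "\<dots> = (\<Prod>x\<in>C. h x)" by simp
  finally show ?thesis .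
qed

lemma PD_expect:
  fixes r :: "'v set \<Rightarrow> real"
  assumes "finite V" "A \<subseteq> V \<times> V"
  shows "(\<Sum>S\<in>Pow (leaves V A). r S * PD V A lam S)
     = (\<Sum>a\<in>A. lam a * ((\<Sum>S\<in>Pow (leaves V A). r S) - (\<Sum>S\<in>Pow (leaves V A - clade V A (snd a)). r S)))"
proof -
  let ?L = "leaves V A"
  have finL: "finite ?L" using assms unfolding leaves_def by auto
  have finA: "finite A" using assms finite_subset by (metis finite_cartesian_product)
  have "(\<Sum>S\<in>Pow ?L. r S * PD V A lam S)
      = (\<Sum>S\<in>Pow ?L. \<Sum>a\<in>A. if clade V A (snd a) \<inter> S \<noteq> {} then lam a * r S else 0)"
    unfolding PD_def
    by (rule sum.cong) (auto simp: sum.inter_filter[OF finA, symmetric] sum_distrib_left intro!: sum.cong)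
  also have "\<dots> = (\<Sum>a\<in>A. \<Sum>S\<in>Pow ?L. if clade V A (snd a) \<inter> S \<noteq> {} then lam a * r S else 0)"
    by (rule sum.swap)
  also have "\<dots> = (\<Sum>a\<in>A. lam a * ((\<Sum>S\<in>Pow ?L. r S) - (\<Sum>S\<in>Pow (?L - clade V A (snd a)). r S)))"
  proof (rule sum.cong[OF refl])
    fix a assume "a \<in> A"
    let ?C = "clade V A (snd a)"
    have CL: "?C \<subseteq> ?L" unfolding clade_def by auto
    have eq: "{S \<in> Pow ?L. ?C \<inter> S \<noteq> {}} = Pow ?L - Pow (?L - ?C)" using CL by auto
    have "(\<Sum>S\<in>Pow ?L. if ?C \<inter> S \<noteq> {} then lam a * r S else 0) = lam a * (\<Sum>S\<in>{S \<in> Pow ?L. ?C \<inter> S \<noteq> {}}. r S)"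
      using finL by (simp add: sum.inter_filter[symmetric] sum_distrib_left)
    also have "\<dots> = lam a * ((\<Sum>S\<in>Pow ?L. r S) - (\<Sum>S\<in>Pow (?L - ?C). r S))"
      unfolding eq using finL by (subst sum_diff) auto
    finally show "(\<Sum>S\<in>Pow ?L. if ?C \<inter> S \<noteq> {} then lam a * r S else 0) = lam a * ((\<Sum>S\<in>Pow ?L. r S) - (\<Sum>S\<in>Pow (?L - ?C). r S))" .
  qed
  finally show ?thesis .
qed

definition tpar :: "'v set \<Rightarrow> ('v \<times> 'v) set \<Rightarrow> 'v \<Rightarrow> nat \<times> 'v \<Rightarrow> (nat \<times> 'v) option" where
  "tpar V A rho = (\<lambda>(j, v). if v \<in> V - {rho} then Some (j, parent A v) else None)"

definition tK :: "('v \<times> 'v) set \<Rightarrow> 'v \<Rightarrow> (nat \<Rightarrow> nat \<Rightarrow> real) \<Rightarrow> (nat \<Rightarrow> ('v \<times> 'v) \<Rightarrow> nat \<Rightarrow> nat \<Rightarrow> real) \<Rightarrow> nat \<times> 'v \<Rightarrow> nat \<Rightarrow> nat \<Rightarrow> real" where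
  "tK A rho rp P = (\<lambda>(j, v) s t. if v = rho then rp j t else P j (parent A v, v) s t)"

definition trank :: "('v \<times> 'v) set \<Rightarrow> 'v \<Rightarrow> nat \<times> 'v \<Rightarrow> nat" where
  "trank A rho = (\<lambda>(j, v). depth A rho v)"

definition curryE :: "nat \<Rightarrow> 'v set \<Rightarrow> (nat \<times> 'v \<Rightarrow> nat) \<Rightarrow> nat \<Rightarrow> 'v \<Rightarrow> nat" where
  "curryE k V \<sigma> = (\<lambda>j\<in>{..<k}. \<lambda>v\<in>V. \<sigma> (j, v))"

lemma interp:
  assumes tree: "rooted_tree V A rho" and markov: "\<forall>j < k. two_state_markov A (rp j) (P j)"
  shows "fkg (tpar V A rho) (tK A rho rp P) (trank A rho) ({..<k} \<times> V)"
proof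
  fix i s t assume i: "i \<in> {..<k} \<times> V" and s: "s \<in> {0::nat, 1}" and t: "t \<in> {0::nat, 1}"
  obtain j v where iv: "i = (j, v)" "j < k" "v \<in> V" using i by auto
  show "tK A rho rp P i s t \<ge> 0"
  proof (cases "v = rho")
    case True
    then show ?thesis using markov iv t unfolding tK_def two_state_markov_def by auto
  next
    case False
    then have "(parent A v, v) \<in> A" using parent_arc[OF tree] iv by auto
    then show ?thesis using markov iv s t False unfolding tK_def two_state_markov_def by auto
  qed
next
  fix i s assume i: "i \<in> {..<k} \<times> V" and s: "s \<in> {0::nat, 1}"
  obtain j v where iv: "i = (j, v)" "j < k" "v \<in> V" using i by auto
  show "tK A rho rp P i s 0 + tK A rho rp P i s 1 = 1"
  proof (cases "v = rho")
    case True
    then show ?thesis using markov iv unfolding tK_def two_state_markov_def by auto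
  next
    case False
    then have "(parent A v, v) \<in> A" using parent_arc[OF tree] iv by auto
    then show ?thesis using markov iv s False unfolding tK_def two_state_markov_def by auto
  qed
next
  fix i assume i: "i \<in> {..<k} \<times> V"
  obtain j v where iv: "i = (j, v)" "j < k" "v \<in> V" using i by auto
  show "tK A rho rp P i 0 1 \<le> tK A rho rp P i 1 1"
  proof (cases "v = rho")
    case True
    then show ?thesis using iv unfolding tK_def by auto
  next
    case False
    let ?a = "(parent A v, v)"
    have a: "?a \<in> A" using parent_arc[OF tree] iv False by auto
    then have m: "P j ?a 0 0 + P j ?a 0 1 = 1" "P j ?a 1 0 + P j ?a 1 1 = 1"
      "P j ?a 0 0 * P j ?a 1 1 - P j ?a 0 1 * P j ?a 1 0 \<ge> 0"
      using markov iv unfolding two_state_markov_def by auto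
    have "P j ?a 0 0 * P j ?a 1 1 - P j ?a 0 1 * P j ?a 1 0 = P j ?a 1 1 - P j ?a 0 1"
      using m(1,2) by algebra
    then show ?thesis using m(3) iv False unfolding tK_def by auto
  qed
next
  fix i j assume i: "i \<in> {..<k} \<times> V" and p: "tpar V A rho i = Some j"
  then show "trank A rho j < trank A rho i"
    using depth_parent[OF tree] unfolding tpar_def trank_def
    by (auto split: if_splits)
qed

lemma closedU: assumes "rooted_tree V A rho" shows "closed (tpar V A rho) ({..<k} \<times> V)"
  unfolding closed_def tpar_def using parent_in[OF assms] by (auto split: if_splits)

lemma bij_curry: "bij_betw (curryE k V) (cfg ({..<k} \<times> V)) (configs k V)"
  unfolding bij_betw_def
proof
  show "inj_on (curryE k V) (cfg ({..<k} \<times> V))"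
  proof (rule inj_onI)
    fix \<sigma> \<tau> assume s: "\<sigma> \<in> cfg ({..<k} \<times> V)" "\<tau> \<in> cfg ({..<k} \<times> V)" and e: "curryE k V \<sigma> = curryE k V \<tau>"
    show "\<sigma> = \<tau>"
    proof (rule PiE_ext[OF s[unfolded cfg_def]])
      fix x assume "x \<in> {..<k} \<times> V"
      then obtain j v where x: "x = (j, v)" "j < k" "v \<in> V" by auto
      have "curryE k V \<sigma> j v = curryE k V \<tau> j v" using e by simp
      then show "\<sigma> x = \<tau> x" using x by (simp add: curryE_def)
    qed
  qed
  show "curryE k V ` cfg ({..<k} \<times> V) = configs k V"
  proof
    show "curryE k V ` cfg ({..<k} \<times> V) \<subseteq> configs k V"
    proof
      fix y assume "y \<in> curryE k V ` cfg ({..<k} \<times> V)"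
      then obtain \<sigma> where \<sigma>: "\<sigma> \<in> cfg ({..<k} \<times> V)" "y = curryE k V \<sigma>" by blast
      have h: "\<sigma> (j, v) \<in> {0,1}" if "j < k" "v \<in> V" for j v using \<sigma>(1) that unfolding cfg_def by auto
      show "y \<in> configs k V"
      proof -
        have h': "\<sigma> (j, v) = 0 \<or> \<sigma> (j, v) = Suc 0" if "j < k" "v \<in> V" for j v using h[OF that] by auto
        show ?thesis unfolding \<sigma>(2) curryE_def configs_def by (auto simp: PiE_iff) (metis h' less_irrefl)
      qed
    qed
    show "configs k V \<subseteq> curryE k V ` cfg ({..<k} \<times> V)"
    proof
      fix \<sigma>s assume s: "\<sigma>s \<in> configs k V"
      let ?\<sigma> = "restrict (\<lambda>(j, v). \<sigma>s j v) ({..<k} \<times> V)"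
      have "?\<sigma> \<in> cfg ({..<k} \<times> V)" using s unfolding cfg_def configs_def by (auto simp: PiE_iff)
      moreover have "curryE k V ?\<sigma> = \<sigma>s"
      proof (rule ext)
        fix j
        show "curryE k V ?\<sigma> j = \<sigma>s j"
        proof (cases "j < k")
          case True
          then have "\<sigma>s j \<in> V \<rightarrow>\<^sub>E {0,1}" using s unfolding configs_def by (metis PiE_mem lessThan_iff)
          then show ?thesis using True unfolding curryE_def
            by (auto simp: PiE_iff extensional_def)
        next
          case False
          then show ?thesis using s unfolding curryE_def configs_def by (auto simp: PiE_iff extensional_def)
        qed
      qed
      ultimately show "\<sigma>s \<in> curryE k V ` cfg ({..<k} \<times> V)" by force
    qed
  qed
qed

lemma leaf_curry: "x \<in> V \<Longrightarrow> leaf_state k (curryE k V \<sigma>) x = restrict (\<lambda>j. \<sigma> (j, x)) {..<k}"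
  unfolding leaf_state_def curryE_def by auto

lemma joint_curry:
  assumes tree: "rooted_tree V A rho"
  shows "joint_prob k A rho rp P (curryE k V \<sigma>) = wt (tpar V A rho) (tK A rho rp P) ({..<k} \<times> V) \<sigma>"
proof -
  have fV: "finite V" and rV: "rho \<in> V" using tree unfolding rooted_tree_def by auto
  have "wt (tpar V A rho) (tK A rho rp P) ({..<k} \<times> V) \<sigma>
      = (\<Prod>j<k. \<Prod>v\<in>V. tK A rho rp P (j, v) (ps (tpar V A rho) \<sigma> (j, v)) (\<sigma> (j, v)))"
    unfolding wt_def by (simp add: prod.cartesian_product)
  also have "\<dots> = (\<Prod>j<k. tree_prob A rho (rp j) (P j) (curryE k V \<sigma> j))"
  proof (rule prod.cong[OF refl])
    fix j assume j: "j \<in> {..<k}"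
    have "(\<Prod>v\<in>V. tK A rho rp P (j, v) (ps (tpar V A rho) \<sigma> (j, v)) (\<sigma> (j, v)))
        = rp j (\<sigma> (j, rho)) * (\<Prod>v\<in>V - {rho}. P j (parent A v, v) (\<sigma> (j, parent A v)) (\<sigma> (j, v)))"
      using fV rV
      by (subst prod.remove[of _ rho]) (auto simp: tK_def tpar_def ps_def intro!: prod.cong)
    also have "(\<Prod>v\<in>V - {rho}. P j (parent A v, v) (\<sigma> (j, parent A v)) (\<sigma> (j, v)))
        = (\<Prod>a\<in>A. P j a (\<sigma> (j, fst a)) (\<sigma> (j, snd a)))"
      using prod.reindex_bij_betw[OF arcs_bij[OF tree], of "\<lambda>a. P j a (\<sigma> (j, fst a)) (\<sigma> (j, snd a))"]
      by simp
    also have "\<dots> = (\<Prod>a\<in>A. P j a (curryE k V \<sigma> j (fst a)) (curryE k V \<sigma> j (snd a)))"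
      using j tA[OF tree] by (auto simp: curryE_def intro!: prod.cong)
    finally show "(\<Prod>v\<in>V. tK A rho rp P (j, v) (ps (tpar V A rho) \<sigma> (j, v)) (\<sigma> (j, v)))
        = tree_prob A rho (rp j) (P j) (curryE k V \<sigma> j)"
      unfolding tree_prob_def using j rV by (simp add: curryE_def)
  qed
  finally show ?thesis unfolding joint_prob_def by simp
qed

lemma sum_translate:
  assumes "rooted_tree V A rho"
  shows "(\<Sum>\<sigma>s\<in>configs k V. joint_prob k A rho rp P \<sigma>s * \<Phi> \<sigma>s)
     = EE (tpar V A rho) (tK A rho rp P) ({..<k} \<times> V) (\<lambda>\<sigma>. \<Phi> (curryE k V \<sigma>))"
  unfolding EE_def
  using sum.reindex_bij_betw[OF bij_curry, of "\<lambda>\<sigma>s. joint_prob k A rho rp P \<sigma>s * \<Phi> \<sigma>s" k V]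
  by (simp add: joint_curry[OF assms])


theorem theorem3p1:
  fixes V :: "'v set" and A :: "('v \<times> 'v) set" and rho :: 'v
    and lam :: "('v \<times> 'v) \<Rightarrow> real"
    and k :: nat
    and rp :: "nat \<Rightarrow> nat \<Rightarrow> real"
    and P :: "nat \<Rightarrow> ('v \<times> 'v) \<Rightarrow> nat \<Rightarrow> nat \<Rightarrow> real"
    and p :: "'v \<Rightarrow> (nat \<Rightarrow> nat) \<Rightarrow> real"
  assumes tree: "rooted_tree V A rho"
    and lam_nonneg: "\<forall>a \<in> A. lam a \<ge> 0"
    and markov: "\<forall>j < k. two_state_markov A (rp j) (P j)"
    and p_range: "\<forall>x \<in> leaves V A. \<forall>i \<in> states k. 0 \<le> p x i \<and> p x i \<le> 1"
    and p_mono: "\<forall>x \<in> leaves V A. \<forall>i \<in> states k. \<forall>l \<in> states k.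
                   (\<forall>j < k. l j \<le> i j) \<longrightarrow> p x i \<le> p x l"
  shows "tfob_expected_PD k V A rho lam rp P p
           \<le> gfob_expected_PD V A lam (gfob_ext_prob k V A rho rp P p)"
proof -
  let ?L = "leaves V A"
  let ?U = "{..<k} \<times> V"
  let ?q = "gfob_ext_prob k V A rho rp P p"
  have F: "fkg (tpar V A rho) (tK A rho rp P) (trank A rho) ?U" by (rule interp[OF tree markov])
  have cU: "closed (tpar V A rho) ?U" by (rule closedU[OF tree])
  have fV: "finite V" and AV: "A \<subseteq> V \<times> V" using tree unfolding rooted_tree_def by auto
  have fU: "finite ?U" using fV by simp
  have finL: "finite ?L" using fV unfolding leaves_def by auto
  have LV: "?L \<subseteq> V" unfolding leaves_def by auto
  have fconf: "finite (configs k V)" unfolding configs_def using fV by (auto intro!: finite_PiE)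
  define W where "W = joint_prob k A rho rp P"
  define g where "g \<sigma>s x = p x (leaf_state k \<sigma>s x)" for \<sigma>s x
  have W1: "(\<Sum>\<sigma>s\<in>configs k V. W \<sigma>s) = 1"
    using sum_translate[OF tree, of k rp P "\<lambda>_. 1"] fkg.fkg_main[OF F fU] cU by (simp add: W_def)
  have ls_states: "leaf_state k \<sigma>s x \<in> states k" if "\<sigma>s \<in> configs k V" "x \<in> V" for \<sigma>s x
    using that unfolding leaf_state_def states_def configs_def by (auto simp: PiE_iff)
  have qdef: "?q x = (\<Sum>\<sigma>s\<in>configs k V. W \<sigma>s * g \<sigma>s x)" if x: "x \<in> V" for x
  proof -
    have "?q x = (\<Sum>i\<in>states k. \<Sum>\<sigma>s\<in>configs k V. if leaf_state k \<sigma>s x = i then W \<sigma>s * p x i else 0)"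
      unfolding gfob_ext_prob_def leaf_marginal_def W_def
      by (rule sum.cong[OF refl]) (simp add: sum.inter_filter[OF fconf, symmetric] sum_distrib_left mult.commute)
    also have "\<dots> = (\<Sum>\<sigma>s\<in>configs k V. \<Sum>i\<in>states k. if leaf_state k \<sigma>s x = i then W \<sigma>s * p x i else 0)"
      by (rule sum.swap)
    also have "\<dots> = (\<Sum>\<sigma>s\<in>configs k V. W \<sigma>s * g \<sigma>s x)"
    proof (rule sum.cong[OF refl])
      fix \<sigma>s assume "\<sigma>s \<in> configs k V"
      then have "leaf_state k \<sigma>s x \<in> states k" using ls_states x by blast
      moreover have "finite (states k)" unfolding states_def by (auto intro!: finite_PiE)
      ultimately show "(\<Sum>i\<in>states k. if leaf_state k \<sigma>s x = i then W \<sigma>s * p x i else 0) = W \<sigma>s * g \<sigma>s x"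
        unfolding g_def by (simp add: sum.delta)
    qed
    finally show ?thesis .
  qed
  have key: "(\<Prod>x\<in>C. \<Sum>\<sigma>s\<in>configs k V. W \<sigma>s * g \<sigma>s x) \<le> (\<Sum>\<sigma>s\<in>configs k V. W \<sigma>s * (\<Prod>x\<in>C. g \<sigma>s x))"
    if C: "C \<subseteq> ?L" for C
  proof -
    have finC: "finite C" using C finL finite_subset by blast
    have tr: "(\<Sum>\<sigma>s\<in>configs k V. W \<sigma>s * \<Phi> \<sigma>s) = EE (tpar V A rho) (tK A rho rp P) ?U (\<lambda>\<sigma>. \<Phi> (curryE k V \<sigma>))" for \<Phi>
      unfolding W_def by (rule sum_translate[OF tree])
    have hyp: "\<forall>x\<in>C. decr ?U (\<lambda>\<sigma>. g (curryE k V \<sigma>) x) \<and> (\<forall>\<sigma>\<in>cfg ?U. g (curryE k V \<sigma>) x \<ge> 0)"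
    proof
      fix x assume xC: "x \<in> C"
      then have xL: "x \<in> ?L" and xV: "x \<in> V" using C LV by auto
      have st: "restrict (\<lambda>j. \<sigma> (j, x)) {..<k} \<in> states k" if "\<sigma> \<in> cfg ?U" for \<sigma>
        using that xV unfolding states_def cfg_def by (auto simp: PiE_iff)
      show "decr ?U (\<lambda>\<sigma>. g (curryE k V \<sigma>) x) \<and> (\<forall>\<sigma>\<in>cfg ?U. g (curryE k V \<sigma>) x \<ge> 0)"
      proof
        show "decr ?U (\<lambda>\<sigma>. g (curryE k V \<sigma>) x)"
          unfolding decr_def
        proof (intro ballI impI)
          fix \<sigma> \<tau> assume s: "\<sigma> \<in> cfg ?U" "\<tau> \<in> cfg ?U" "\<forall>y\<in>?U. \<sigma> y \<le> \<tau> y"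
          have "p x (restrict (\<lambda>j. \<tau> (j, x)) {..<k}) \<le> p x (restrict (\<lambda>j. \<sigma> (j, x)) {..<k})"
            using p_mono xL st[OF s(1)] st[OF s(2)] s(3) xV by auto
          then show "g (curryE k V \<tau>) x \<le> g (curryE k V \<sigma>) x"
            unfolding g_def leaf_curry[OF xV] .
        qed
        show "\<forall>\<sigma>\<in>cfg ?U. g (curryE k V \<sigma>) x \<ge> 0"
          using p_range xL st unfolding g_def leaf_curry[OF xV] by blast
      qed
    qed
    show ?thesis
      unfolding tr using fkg.fkg_prod[OF F fU subset_refl cU finC hyp] by simp
  qed
  have tsub: "(\<Sum>S\<in>Pow (?L - C). tfob_surv_prob k V A rho rp P p S) = (\<Sum>\<sigma>s\<in>configs k V. W \<sigma>s * (\<Prod>x\<in>C. g \<sigma>s x))"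
    if C: "C \<subseteq> ?L" for C
  proof -
    have "(\<Sum>S\<in>Pow (?L - C). tfob_surv_prob k V A rho rp P p S)
       = (\<Sum>S\<in>Pow (?L - C). \<Sum>\<sigma>s\<in>configs k V. W \<sigma>s * ((\<Prod>x\<in>S. 1 - g \<sigma>s x) * (\<Prod>x\<in>?L - S. g \<sigma>s x)))"
      unfolding tfob_surv_prob_def W_def g_def by (simp add: mult.assoc)
    also have "\<dots> = (\<Sum>\<sigma>s\<in>configs k V. W \<sigma>s * (\<Sum>S\<in>Pow (?L - C). (\<Prod>x\<in>S. 1 - g \<sigma>s x) * (\<Prod>x\<in>?L - S. g \<sigma>s x)))"
      by (subst sum.swap) (simp add: sum_distrib_left)
    also have "\<dots> = (\<Sum>\<sigma>s\<in>configs k V. W \<sigma>s * (\<Prod>x\<in>C. g \<sigma>s x))"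
      using G1[OF finL C] by simp
    finally show ?thesis .
  qed
  have gsub: "(\<Sum>S\<in>Pow (?L - C). (\<Prod>x\<in>S. 1 - ?q x) * (\<Prod>x\<in>?L - S. ?q x)) = (\<Prod>x\<in>C. ?q x)"
    if C: "C \<subseteq> ?L" for C
    by (rule G1[OF finL C])
  have CL: "clade V A v \<subseteq> ?L" for v unfolding clade_def by auto
  have "tfob_expected_PD k V A rho lam rp P p
      = (\<Sum>a\<in>A. lam a * (1 - (\<Sum>\<sigma>s\<in>configs k V. W \<sigma>s * (\<Prod>x\<in>clade V A (snd a). g \<sigma>s x))))"
    unfolding tfob_expected_PD_def PD_expect[OF fV AV]
    using tsub[of "{}"] tsub[OF CL] W1 by simp
  also have "\<dots> \<le> (\<Sum>a\<in>A. lam a * (1 - (\<Prod>x\<in>clade V A (snd a). ?q x)))"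
  proof (rule sum_mono)
    fix a assume a: "a \<in> A"
    have "(\<Prod>x\<in>clade V A (snd a). ?q x) = (\<Prod>x\<in>clade V A (snd a). \<Sum>\<sigma>s\<in>configs k V. W \<sigma>s * g \<sigma>s x)"
      by (rule prod.cong[OF refl]) (use CL LV qdef in blast)
    also have "\<dots> \<le> (\<Sum>\<sigma>s\<in>configs k V. W \<sigma>s * (\<Prod>x\<in>clade V A (snd a). g \<sigma>s x))"
      by (rule key[OF CL])
    finally show "lam a * (1 - (\<Sum>\<sigma>s\<in>configs k V. W \<sigma>s * (\<Prod>x\<in>clade V A (snd a). g \<sigma>s x)))
        \<le> lam a * (1 - (\<Prod>x\<in>clade V A (snd a). ?q x))"
      using lam_nonneg a by (intro mult_left_mono) auto
  qed
  also have "\<dots> = gfob_expected_PD V A lam ?q"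
    unfolding gfob_expected_PD_def PD_expect[OF fV AV]
    using gsub[of "{}"] gsub[OF CL] by (simp add: mult.assoc)
  finally show ?thesis .
qed

end
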